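(* Let $f$ be a participatory budgeting rule that satisfies Extended Justified Representation (EJR). Then for every ordinary approval-based PB instance $I=(N,\mathcal{T},B,\mathrm{cost},\mathcal{A})$ and every nonempty $T\subseteq\mathcal{T}$, \[ d_f(T)\;\ge\;\frac{\min_{t\in T}\mathrm{cost}(t)}{\max_{t\in T}\mathrm{cost}(t)}\cdot\frac{1}{2}\cdot\left(\frac{\mathrm{cost}(T)}{\max_{t\in T}\mathrm{cost}(t)}-1\right). \]
   Context: An approval-based PB instance is $I=(N,\mathcal{T},B,\mathrm{cost},\mathcal{A})$: $N$ is a set of $n$ voters, $\mathcal{T}$ a finite set of projects, $B>0$ a budget, $\mathrm{cost}:\mathcal{T}\to\mathbb{R}_{>0}$, with $\mathrm{cost}(S)=\sum_{t\in S}\mathrm{cost}(t)$, and $A_i\subseteq\mathcal{T}$ the projects approved by voter $i$. A PB rule $f$ maps each instance to $f(I)\subseteq\mathcal{T}$ with $\mathrm{cost}(f(I))\le B$. The instance is ordinary if $\mathrm{cost}(t)\cdot n\ge B$ for every project $t\in\mathcal{T}$. For $T\subseteq\mathcal{T}$, $V\subseteq N$ is $T$-cohesive if $T\subseteq\bigcap_{i\in V}A_i$ and $\mathrm{cost}(T)/B\le|V|/n$; $\mathcal{V}(T)$ is the set of all $T$-cohesive groups. $\mathrm{avg}_W(V)=\frac{1}{|V|}\sum_{i\in V}|W\cap A_i|$. The proportionality degree is $d_f(T)=\sup\{g:\ \min_{V\in\mathcal{V}(T)}\mathrm{avg}_{f(I)}(V)\ge\min(|T|,g)\}$. A rule $f$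 satisfies EJR if for every instance $I$, every $T\subseteq\mathcal{T}$ and every $T$-cohesive group $V$, there is a voter $i\in V$ with $|A_i\cap f(I)|\ge|T|$. *)

theory Defs
  imports Complex_Main "HOL-Library.Extended_Real"
begin

record ('v, 'p) pb_instance =
  voters   :: "'v set"
  projects :: "'p set"
  budget   :: real
  pcost    :: "'p \<Rightarrow> real"
  appr     :: "'v \<Rightarrow> 'p set"

definition cost_set :: "('v, 'p) pb_instance \<Rightarrow> 'p set \<Rightarrow> real" where
  "cost_set I S = (\<Sum>t\<in>S. pcost I t)"

definition valid_instance :: "('v, 'p) pb_instance \<Rightarrow> bool" where
  "valid_instance I \<longleftrightarrow>
     finite (voters I) \<and> voters I \<noteq> {} \<and>
     finite (projects I) \<and>
     budget I > 0 \<and>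
     (\<forall>t\<in>projects I. pcost I t > 0) \<and>
     (\<forall>i\<in>voters I. appr I i \<subseteq> projects I)"

definition ordinary :: "('v, 'p) pb_instance \<Rightarrow> bool" where
  "ordinary I \<longleftrightarrow> (\<forall>t\<in>projects I. pcost I t * real (card (voters I)) \<ge> budget I)"

definition pb_rule :: "(('v, 'p) pb_instance \<Rightarrow> 'p set) \<Rightarrow> bool" where
  "pb_rule f \<longleftrightarrow> (\<forall>I. valid_instance I \<longrightarrow>
       f I \<subseteq> projects I \<and> cost_set I (f I) \<le> budget I)"

definition cohesive :: "('v, 'p) pb_instance \<Rightarrow> 'p set \<Rightarrow> 'v set \<Rightarrow> bool" where
  "cohesive I T V \<longleftrightarrow> V \<subseteq> voters I \<and> V \<noteq> {} \<and>
     (\<forall>i\<in>V. T \<subseteq> appr I i) \<and>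
     cost_set I T / budget I \<le> real (card V) / real (card (voters I))"

definition avg_sat :: "('v, 'p) pb_instance \<Rightarrow> 'p set \<Rightarrow> 'v set \<Rightarrow> real" where
  "avg_sat I W V = (\<Sum>i\<in>V. real (card (W \<inter> appr I i))) / real (card V)"

definition EJR :: "(('v, 'p) pb_instance \<Rightarrow> 'p set) \<Rightarrow> bool" where
  "EJR f \<longleftrightarrow> (\<forall>I T V. valid_instance I \<longrightarrow> T \<subseteq> projects I \<longrightarrow> cohesive I T V \<longrightarrow>
       (\<exists>i\<in>V. card (appr I i \<inter> f I) \<ge> card T))"

text \<open>Proportionality degree d_f(T) (in the extended reals; the minimum over the
  finite family of T-cohesive groups is unfolded to a universal quantifier,
  with the convention min over the empty family = +infinity).\<close>
definition prop_degree ::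
    "(('v, 'p) pb_instance \<Rightarrow> 'p set) \<Rightarrow> ('v, 'p) pb_instance \<Rightarrow> 'p set \<Rightarrow> ereal" where
  "prop_degree f I T = Sup {ereal g | g. \<forall>V. cohesive I T V \<longrightarrow>
       avg_sat I (f I) V \<ge> min (real (card T)) g}"

end

theory Submission
  imports Defs
begin

lemma count_le_min:
  "(\<Sum>j\<in>{1..k}. if j \<le> (x::nat) then (1::real) else 0) = real (min k x)"
  by (induction k) auto

lemma gauss_real: "(\<Sum>j\<in>{1..m}. real j) = real m * (real m + 1) / 2"
  by (induction m) (auto simp: field_simps)

lemma sum_ind_card:
  assumes "finite V"
  shows "(\<Sum>i\<in>V. if P i then (1::real) else 0) = real (card {i\<in>V. P i})"
proof -
  have "(\<Sum>i\<in>V. if P i then (1::real) else 0) = (\<Sum>i\<in>{i\<in>V. P i}. 1)"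
    using assms by (simp add: sum.If_cases Int_def)
  then show ?thesis by simp
qed

lemma key_real:
  fixes y :: real and m :: nat
  assumes "real m \<le> y" "y < real m + 1" "y > 0"
  shows "(\<Sum>j\<in>{1..m}. (1 - real j / y)) \<ge> (y - 1) / 2"
proof -
  have "(\<Sum>j\<in>{1..m}. (1 - real j / y)) = real m - (\<Sum>j\<in>{1..m}. real j) / y"
    by (simp add: sum_subtractf sum_divide_distrib)
  also have "\<dots> = real m - real m * (real m + 1) / (2 * y)"
    by (simp only: gauss_real)
  finally have e: "(\<Sum>j\<in>{1..m}. (1 - real j / y)) = real m - real m * (real m + 1) / (2 * y)" .
  have "(y - real m) * (y - real m - 1) \<le> 0"
    using assms by (intro mult_nonneg_nonpos) auto
  hence "y * y - (2 * real m + 1) * y + real m * (real m + 1) \<le> 0"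
    by (simp add: algebra_simps)
  hence "(y - 1) / 2 \<le> real m - real m * (real m + 1) / (2 * y)"
    using assms(3) by (simp add: field_simps)
  then show ?thesis using e by simp
qed

theorem theorem3:
  fixes f :: "('v, 'p) pb_instance \<Rightarrow> 'p set"
    and I :: "('v, 'p) pb_instance"
    and T :: "'p set"
  assumes "pb_rule f"
    and "EJR f"
    and "valid_instance I"
    and "ordinary I"
    and "T \<subseteq> projects I"
    and "T \<noteq> {}"
  shows "prop_degree f I T \<ge>
    ereal (Min (pcost I ` T) / Max (pcost I ` T) * (1 / 2) *
           (cost_set I T / Max (pcost I ` T) - 1))"
proof -
  define N where "N = voters I"
  define n where "n = card N"
  define B where "B = budget I"
  define cmax where "cmax = Max (pcost I ` T)"
  define cmin where "cmin = Min (pcost I ` T)"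
  define C where "C = cost_set I T"
  define k where "k = card T"
  define W where "W = f I"
  define sat where "sat i = card (W \<inter> appr I i)" for i
  define y where "y = C / cmax"
  define a where "a = cmax * real n / B"
  have finP: "finite (projects I)" and finN: "finite N" and NE: "N \<noteq> {}" and Bpos: "B > 0"
    and cpos: "\<And>t. t \<in> projects I \<Longrightarrow> pcost I t > 0"
    using assms(3) unfolding valid_instance_def N_def B_def by auto
  have npos: "real n > 0" using finN NE n_def by (simp add: card_gt_0_iff)
  have finT: "finite T" using finP assms(5) finite_subset by blast
  have cmaxin: "cmax \<in> pcost I ` T" unfolding cmax_def using finT assms(6) by (intro Max_in) auto
  have cminin: "cmin \<in> pcost I ` T" unfolding cmin_def using finT assms(6) by (intro Min_in) auto
  have cmaxpos: "cmax > 0" using cmaxin cpos assms(5) by auto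
  have cminpos: "cmin > 0" using cminin cpos assms(5) by auto
  have cle: "\<And>t. t \<in> T \<Longrightarrow> pcost I t \<le> cmax" unfolding cmax_def using finT by auto
  have cminle: "cmin \<le> cmax" using cminin cle by auto
  have Cpos: "C > 0" unfolding C_def cost_set_def using finT assms(6) cpos assms(5)
    by (intro sum_pos) auto
  have ypos: "y > 0" unfolding y_def using Cpos cmaxpos by simp
  have yk: "y \<le> real k"
  proof -
    have "C \<le> real k * cmax" unfolding C_def cost_set_def k_def
      using sum_bounded_above[of T "pcost I" cmax] cle by auto
    thus ?thesis unfolding y_def using cmaxpos by (simp add: field_simps)
  qed
  have costsub: "\<And>S. S \<subseteq> T \<Longrightarrow> cost_set I S \<le> real (card S) * cmax"
    unfolding cost_set_def using sum_bounded_above[of _ "pcost I" cmax] cle by auto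
  define g where "g = cmin / cmax * (1 / 2) * (C / cmax - 1)"
  have main: "avg_sat I (f I) V \<ge> g" if coh: "cohesive I T V" for V
  proof -
    have VN: "V \<subseteq> N" and VE: "V \<noteq> {}" and Vapp: "\<And>i. i \<in> V \<Longrightarrow> T \<subseteq> appr I i"
      and Vc: "C / B \<le> real (card V) / real n"
      using coh unfolding cohesive_def N_def C_def B_def n_def by auto
    have finV: "finite V" using VN finN finite_subset by blast
    define s where "s = real (card V)"
    have spos: "s > 0" using finV VE s_def by (simp add: card_gt_0_iff)
    have sy: "s \<ge> y * a"
    proof -
      have "y * a = C * real n / B" unfolding y_def a_def using cmaxpos by (simp add: field_simps)
      also have "\<dots> \<le> s" using Vc npos Bpos unfolding s_def by (simp add: field_simps)
      finally show ?thesis .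
    qed
    have small: "real (card {i\<in>V. sat i < j}) < real j * a" if j: "j \<in> {1..k}" for j
    proof (rule ccontr)
      assume H: "\<not> ?thesis"
      define U where "U = {i\<in>V. sat i < j}"
      have Ug: "real (card U) \<ge> real j * a" using H U_def by simp
      obtain Tj where Tj: "Tj \<subseteq> T" "card Tj = j"
        using obtain_subset_with_card_n[of j T] j k_def by auto
      have apos: "a > 0" unfolding a_def using cmaxpos npos Bpos by simp
      have "real (card U) > 0" 
      proof -
        have "real j > 0" using j by auto
        hence "real j * a > 0" using apos by simp
        thus ?thesis using Ug by linarith
      qed
      hence UE: "U \<noteq> {}" by auto
      have "cost_set I Tj / B \<le> real (card U) / real n"
      proof -
        have "cost_set I Tj \<le> real j * cmax" using costsub[OF Tj(1)] Tj(2) by simp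
        hence "cost_set I Tj / B \<le> real j * cmax / B" using Bpos by (simp add: divide_right_mono)
        also have "\<dots> = real j * a / real n" unfolding a_def using npos by simp
        also have "\<dots> \<le> real (card U) / real n" using Ug npos by (simp add: divide_right_mono)
        finally show ?thesis .
      qed
      hence "cohesive I Tj U" unfolding cohesive_def using UE VN Vapp Tj(1)
        unfolding U_def N_def B_def n_def by auto
      moreover have "Tj \<subseteq> projects I" using Tj(1) assms(5) by auto
      ultimately obtain i where "i \<in> U" "card (appr I i \<inter> f I) \<ge> card Tj"
        using assms(2) assms(3) unfolding EJR_def by blast
      thus False unfolding U_def sat_def W_def using Tj(2) by (simp add: Int_commute)
    qed
    have big: "real (card {i\<in>V. j \<le> sat i}) \<ge> s - real j * a" if j: "j \<in> {1..k}" for j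
    proof -
      have "{i\<in>V. j \<le> sat i} = V - {i\<in>V. sat i < j}" by auto
      hence "card {i\<in>V. j \<le> sat i} = card V - card {i\<in>V. sat i < j}"
        using finV by (simp add: card_Diff_subset)
      moreover have "card {i\<in>V. sat i < j} \<le> card V" using finV by (intro card_mono) auto
      ultimately have "real (card {i\<in>V. j \<le> sat i}) = s - real (card {i\<in>V. sat i < j})"
        unfolding s_def by (simp add: of_nat_diff)
      thus ?thesis using small[OF j] by simp
    qed
    have sum1: "(\<Sum>i\<in>V. real (sat i)) \<ge> (\<Sum>j\<in>{1..k}. real (card {i\<in>V. j \<le> sat i}))"
    proof -
      have "(\<Sum>j\<in>{1..k}. real (card {i\<in>V. j \<le> sat i}))
          = (\<Sum>j\<in>{1..k}. \<Sum>i\<in>V. if j \<le> sat i then (1::real) else 0)"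
        using sum_ind_card[OF finV] by simp
      also have "\<dots> = (\<Sum>i\<in>V. \<Sum>j\<in>{1..k}. if j \<le> sat i then (1::real) else 0)"
        by (rule sum.swap)
      also have "\<dots> = (\<Sum>i\<in>V. real (min k (sat i)))" using count_le_min by presburger
      also have "\<dots> \<le> (\<Sum>i\<in>V. real (sat i))" by (intro sum_mono) simp
      finally show ?thesis .
    qed
    have avg_nonneg: "avg_sat I (f I) V \<ge> 0" unfolding avg_sat_def by (intro divide_nonneg_nonneg sum_nonneg) auto
    have avg_eq: "avg_sat I (f I) V = (\<Sum>i\<in>V. real (sat i)) / s"
      unfolding avg_sat_def sat_def W_def s_def by simp
    show ?thesis
    proof (cases "y \<ge> 1")
      case False
      hence "g \<le> 0" unfolding g_def y_def[symmetric] using cminpos cmaxpos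
        by (simp add: divide_nonpos_pos mult_nonneg_nonpos)
      thus ?thesis using avg_nonneg by simp
    next
      case True
      define m where "m = nat \<lfloor>y\<rfloor>"
      have my: "real m \<le> y" "y < real m + 1" unfolding m_def using True by linarith+
      have mk: "m \<le> k" using my(1) yk by linarith
      have "(\<Sum>j\<in>{1..k}. real (card {i\<in>V. j \<le> sat i})) \<ge> (\<Sum>j\<in>{1..m}. real (card {i\<in>V. j \<le> sat i}))"
        using mk by (intro sum_mono2) auto
      moreover have "(\<Sum>j\<in>{1..m}. real (card {i\<in>V. j \<le> sat i})) \<ge> (\<Sum>j\<in>{1..m}. s * (1 - real j / y))"
      proof (intro sum_mono)
        fix j assume j: "j \<in> {1..m}"
        have "a \<le> s / y" using sy ypos by (simp add: field_simps)
        hence "real j * a \<le> real j * (s / y)" by (intro mult_left_mono) auto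
        hence "s * (1 - real j / y) \<le> s - real j * a" by (simp add: algebra_simps)
        thus "s * (1 - real j / y) \<le> real (card {i\<in>V. j \<le> sat i})" using big[of j] j mk by auto
      qed
      moreover have "(\<Sum>j\<in>{1..m}. s * (1 - real j / y)) \<ge> s * ((y - 1) / 2)"
        using key_real[OF my ypos] spos by (simp add: sum_distrib_left[symmetric])
      ultimately have "(\<Sum>i\<in>V. real (sat i)) \<ge> s * ((y - 1) / 2)" using sum1 by linarith
      hence "s * ((y - 1) / 2) \<le> s * avg_sat I (f I) V" using avg_eq spos by simp
      hence "avg_sat I (f I) V \<ge> (y - 1) / 2" using spos mult_le_cancel_left_pos by blast
      moreover have "g \<le> (y - 1) / 2"
      proof -
        have "cmin / cmax \<le> 1" using cminle cmaxpos by simp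
        hence "cmin / cmax * ((y - 1) / 2) \<le> 1 * ((y - 1) / 2)"
          using True by (intro mult_right_mono) auto
        thus ?thesis unfolding g_def y_def by simp
      qed
      ultimately show ?thesis by linarith
    qed
  qed
  have "ereal g \<in> {ereal g | g. \<forall>V. cohesive I T V \<longrightarrow>
       avg_sat I (f I) V \<ge> min (real (card T)) g}"
    using main by (auto intro: min.coboundedI2)
  hence "ereal g \<le> prop_degree f I T" unfolding prop_degree_def by (rule Sup_upper)
  thus ?thesis unfolding g_def cmin_def cmax_def C_def .
qed

end
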